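(* Let $a,b,m$ be parameters. The power series $$\left(\frac{1+ax}{1+bx},\ \frac{mx(1+ax)}{(1+bx)^2}\right)\cdot c(x)=\frac{1+ax}{1+bx}\,c\!\left(\frac{mx(1+ax)}{(1+bx)^2}\right)$$ is the generating function of the sequence $(a_n)_{n\ge0}$ determined by $a_0=1$, $a_1=a-b+m$, and, for $n\ge2$, $$a_n=(2m-b)\,a_{n-1}+m\sum_{k=0}^{n-3}a_{k+1}a_{n-k-2}.$$
   Context: $c(x)=\frac{1-\sqrt{1-4x}}{2x}$ is the generating function of the Catalan numbers. For power series $g(x)$ with $g(0)\neq0$ and $f(x)$ with $f(0)=0$, the Riordan array $(g,f)$ acts on a power series $h(x)$ by $(g,f)\cdot h(x)=g(x)h(f(x))$. *)

theory Defs
  imports "HOL-Computational_Algebra.Formal_Power_Series"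
begin

definition catalan :: "nat \<Rightarrow> nat" where
  "catalan n = (2 * n choose n) div (n + 1)"

definition catalan_fps :: "'a::field fps" where
  "catalan_fps = Abs_fps (\<lambda>n. of_nat (catalan n))"

definition riordan_act :: "'a::field fps \<Rightarrow> 'a fps \<Rightarrow> 'a fps \<Rightarrow> 'a fps" where
  "riordan_act g f h = g * (h oo f)"

end

theory Submission imports Defs begin
unbundle fps_syntax

lemma cat_dvd: "(n + 1) * catalan n = (2 * n choose n)"
proof -
  have h: "(n + 1) * (2 * n choose (n + 1)) = n * (2 * n choose n)"
  proof (cases n)
    case 0 then show ?thesis by simp
  next
    case (Suc k)
    have "Suc (Suc k) * (Suc (Suc k + k) choose Suc (Suc k)) = Suc k * (Suc (Suc k + k) choose Suc k)"
      using Suc_times_binomial_add[of "Suc k" k] by simp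
    then show ?thesis using Suc by (simp add: mult_2)
  qed
  have le: "(2 * n choose (n + 1)) \<le> (2 * n choose n)"
    using binomial_maximum'[of n "n+1"] by simp
  have "(2 * n choose n) = (n + 1) * ((2 * n choose n) - (2 * n choose (n + 1)))"
    using h le by (simp add: diff_mult_distrib2 algebra_simps)
  then have "(n + 1) dvd (2 * n choose n)" by (metis dvd_triv_left)
  then show ?thesis unfolding catalan_def by (rule dvd_mult_div_cancel)
qed

lemma central_fact: "real (2 * m choose m) = fact (2 * m) / (fact m * fact m)"
  using binomial_fact[of m "2*m", where 'a=real] by (simp add: mult_2)

lemma central_step: "real (2 * Suc n choose Suc n) * (n + 1) = real (2 * n choose n) * (2 * (2 * n + 1))"
proof -
  define F :: real where "F = fact (2*n)"
  define G :: real where "G = fact n"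
  define R where "R = real (2 * Suc n choose Suc n)"
  define C where "C = real (2 * n choose n)"
  have G0: "G \<noteq> 0" unfolding G_def by simp
  have "R = fact (2 * Suc n) / (fact (Suc n) * fact (Suc n))"
    unfolding R_def by (rule central_fact)
  also have "fact (2 * Suc n) = F * ((2*n+1)*(2*n+2))"
    unfolding F_def by (simp add: fact_Suc algebra_simps)
  also have "fact (Suc n) * fact (Suc n) = G * G * ((n+1)*(n+1))"
    unfolding G_def by (simp add: algebra_simps)
  finally have e1: "R * (G * G * ((n+1)*(n+1))) = F * ((2*n+1)*(2*n+2))"
    using G0 by (simp add: divide_simps del: of_nat_Suc)
  have "C = F / (G * G)"
    unfolding F_def G_def C_def by (rule central_fact)
  then have e2: "C * (G * G) = F" using G0 by simp
  have "(R * (n+1)) * (G * G * (n+1)) = R * (G * G * ((n+1)*(n+1)))"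
    by (simp add: algebra_simps)
  also have "\<dots> = C * (G * G) * ((2*n+1)*(2*n+2))" using e1 e2 by simp
  also have "\<dots> = (C * (2*(2*n+1))) * (G * G * (n+1))" by (simp add: algebra_simps)
  finally have "(R * (n+1)) * (G * G * (n+1)) = (C * (2*(2*n+1))) * (G * G * (n+1))" .
  then have "R * (n+1) = C * (2*(2*n+1))"
    using G0 by (subst (asm) mult_right_cancel) auto
  then show ?thesis unfolding R_def C_def .
qed

lemma gch_step: "(k + 1) * ((a::real) gchoose Suc k) = (a gchoose k) * (a - k)"
proof -
  have "fact (Suc k) * (a gchoose Suc k) = (\<Prod>i = 0..<Suc k. a - of_nat i)"
    by (rule gbinomial_mult_fact)
  also have "\<dots> = (\<Prod>i = 0..<k. a - of_nat i) * (a - k)" by simp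
  also have "\<dots> = fact k * (a gchoose k) * (a - k)" by (simp add: gbinomial_mult_fact)
  finally have "fact k * ((k+1) * (a gchoose Suc k)) = fact k * ((a gchoose k) * (a - k))"
    by (simp add: algebra_simps)
  then show ?thesis by (simp add: add.commute)
qed

lemma half_gch: "((1/2::real) gchoose Suc n) * (-4)^(Suc n) * (n + 1) = -2 * real (2 * n choose n)"
proof (induction n)
  case 0 then show ?case by simp
next
  case (Suc n)
  define H where "H = (\<lambda>k. ((1/2::real) gchoose Suc k) * (-4)^(Suc k))"
  define C where "C = (\<lambda>k. real (2 * k choose k))"
  have IH: "H n * (n+1) = -2 * C n" using Suc unfolding H_def C_def .
  have st: "H (Suc n) * (n + 2) = H n * (4 * n + 2)"
  proof -
    have g: "(real (Suc n) + 1) * ((1/2::real) gchoose Suc (Suc n)) = ((1/2::real) gchoose Suc n) * (1/2 - real (Suc n))"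
      by (rule gch_step)
    have "H (Suc n) * (n + 2) = ((real (Suc n) + 1) * ((1/2::real) gchoose Suc (Suc n))) * (-4)^(Suc (Suc n))"
      unfolding H_def by (simp add: algebra_simps)
    also have "\<dots> = ((1/2::real) gchoose Suc n) * (1/2 - real (Suc n)) * (-4)^(Suc (Suc n))"
      by (simp only: g)
    also have "\<dots> = H n * (4 * n + 2)" unfolding H_def power_Suc by (simp add: algebra_simps)
    finally show ?thesis .
  qed
  have cs: "C (Suc n) * (n + 1) = C n * (2 * (2 * n + 1))" unfolding C_def by (rule central_step)
  have "(H (Suc n) * (Suc n + 1)) * (n + 1) = (H (Suc n) * (n + 2)) * (n + 1)"
    by (simp add: add.commute)
  also have "\<dots> = (H n * (n + 1)) * (4 * n + 2)" unfolding st by (simp only: mult_ac)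
  also have "\<dots> = -2 * (C n * (2 * (2 * n + 1)))" unfolding IH by (simp add: algebra_simps)
  also have "\<dots> = (-2 * C (Suc n)) * (n + 1)" unfolding cs[symmetric] by (simp only: mult_ac)
  finally have "(H (Suc n) * (Suc n + 1)) * (n + 1) = (-2 * C (Suc n)) * (n + 1)" .
  then have "H (Suc n) * (Suc n + 1) = -2 * C (Suc n)"
    by (subst (asm) mult_right_cancel) auto
  then show ?case unfolding H_def C_def by simp
qed

lemma cancel_aux: "(A::real) * (real j + 1) = B * (real j + 1) \<Longrightarrow> A = B"
proof -
  assume "A * (real j + 1) = B * (real j + 1)"
  moreover have "real j + 1 \<noteq> 0" by linarith
  ultimately show "A = B" by simp
qed

lemma s_coeff: "((1/2::real) gchoose Suc j) * (-4)^(Suc j) = -2 * real (catalan j)"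
proof -
  have h1: "((1/2::real) gchoose Suc j) * (-4)^(Suc j) * (j + 1) = -2 * real (2 * j choose j)"
    by (rule half_gch)
  have "real ((j + 1) * catalan j) = real (2 * j choose j)" by (simp only: cat_dvd)
  then have h2: "real (2 * j choose j) = real (catalan j) * (real j + 1)"
    by (simp only: of_nat_mult of_nat_add of_nat_1 mult.commute)
  have "((1/2::real) gchoose Suc j) * (-4)^(Suc j) * (real j + 1) = -2 * real (2 * j choose j)"
    using h1 by (simp add: add.commute)
  also have "\<dots> = (-2 * real (catalan j)) * (real j + 1)" unfolding h2 by (simp only: mult.assoc)
  finally have "((1/2::real) gchoose Suc j) * (-4)^(Suc j) * (real j + 1) = (-2 * real (catalan j)) * (real j + 1)" .
  then show ?thesis by (rule cancel_aux)
qed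

lemma one_gch: "((1::real) gchoose n) = (if n = 0 \<or> n = 1 then 1 else 0)"
proof (cases n)
  case 0 then show ?thesis by simp
next
  case (Suc k)
  have "((0::real) + 1) gchoose (Suc k) = (0 gchoose k) + (0 gchoose (Suc k))"
    by (rule gbinomial_Suc_Suc)
  then show ?thesis using Suc by (simp add: gbinomial_0_left)
qed
lemma cancel4: "fps_X * (D::real fps) * 4 = 0 \<Longrightarrow> D = 0"
  by simp

lemma cat_fps_real: "(Abs_fps (\<lambda>n. real (catalan n))) = 1 + fps_X * (Abs_fps (\<lambda>n. real (catalan n)))^2"
proof -
  define C where "C = Abs_fps (\<lambda>n. real (catalan n))"
  define S where "S = Abs_fps (\<lambda>k. ((1/2::real) gchoose k) * (-4)^k)"
  have S_eq: "S = 1 - 2 * fps_X * C"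
  proof (rule fps_ext)
    fix n show "S $ n = (1 - 2 * fps_X * C) $ n"
    proof (cases n)
      case 0 then show ?thesis by (simp add: S_def)
    next
      case (Suc j)
      have a: "S $ Suc j = -2 * real (catalan j)" unfolding S_def fps_nth_Abs_fps by (rule s_coeff)
      have b: "(1 - 2 * fps_X * C) $ Suc j = -2 * real (catalan j)"
        by (simp add: C_def numeral_fps_const mult.assoc)
      show ?thesis using a b Suc by simp
    qed
  qed
  have SS: "S * S = 1 - 4 * fps_X"
  proof (rule fps_ext)
    fix n
    have "(S * S) $ n = (\<Sum>i = 0..n. ((1/2::real) gchoose i) * ((1/2) gchoose (n - i)) * (-4)^n)"
      unfolding fps_mult_nth
    proof (rule sum.cong)
      fix i assume "i \<in> {0..n}"
      then have "(-4::real)^i * (-4)^(n-i) = (-4)^n" by (metis atLeastAtMost_iff le_add_diff_inverse power_add)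
      then show "S $ i * S $ (n - i) = ((1/2::real) gchoose i) * ((1/2) gchoose (n - i)) * (-4)^n"
        unfolding S_def fps_nth_Abs_fps by (metis mult.commute mult.left_commute)
    qed simp
    also have "\<dots> = (1 gchoose n) * (-4)^n"
      unfolding sum_distrib_right[symmetric] using gbinomial_Vandermonde[of "1/2::real" "1/2" n] by simp
    also have "\<dots> = (1 - 4 * fps_X) $ n"
      by (cases "n = 1") (simp_all add: one_gch numeral_fps_const)
    finally show "(S * S) $ n = (1 - 4 * fps_X) $ n" .
  qed
  have "(1 - 2 * fps_X * C) * (1 - 2 * fps_X * C) = 1 - 4 * fps_X"
    using SS unfolding S_eq .
  then have "fps_X * (C - 1 - fps_X * C^2) * 4 = (0 :: real fps)"
    by algebra
  then have "C - 1 - fps_X * C^2 = 0" by (rule cancel4)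
  then show ?thesis unfolding C_def[symmetric] by (simp only: diff_diff_eq right_minus_eq)
qed

lemma catalan_rec: "catalan (Suc n) = (\<Sum>i = 0..n. catalan i * catalan (n - i))"
proof -
  have "real (catalan (Suc n)) = (Abs_fps (\<lambda>n. real (catalan n))) $ Suc n" by simp
  also have "\<dots> = (1 + fps_X * (Abs_fps (\<lambda>n. real (catalan n)))^2) $ Suc n"
    by (subst cat_fps_real) (rule refl)
  also have "\<dots> = (\<Sum>i = 0..n. real (catalan i) * real (catalan (n - i)))"
    by (simp only: fps_add_nth fps_X_mult_nth) (simp add: power2_eq_square fps_mult_nth)
  finally show ?thesis by (simp flip: of_nat_mult of_nat_sum)
qed

lemma catalan_fps_eq: "(catalan_fps :: 'a::field fps) = 1 + fps_X * catalan_fps^2"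
proof (rule fps_ext)
  fix n
  show "(catalan_fps :: 'a fps) $ n = (1 + fps_X * catalan_fps^2) $ n"
  proof (cases n)
    case 0 then show ?thesis by (simp add: catalan_fps_def catalan_def)
  next
    case (Suc j)
    then show ?thesis
      by (simp only: fps_add_nth fps_X_mult_nth) (simp add: catalan_fps_def power2_eq_square fps_mult_nth catalan_rec)
  qed
qed

lemma aux2: "x = y + (S + y) \<longleftrightarrow> x = 2 * y + (S::'a::comm_ring_1)"
  by (simp add: algebra_simps mult_2)

lemma split_conv:
  fixes t :: "nat \<Rightarrow> 'a::comm_ring_1"
  assumes t0: "t 0 = 1" and n: "n \<ge> 2"
  shows "(\<Sum>i = 0..n - 1. t i * t (n - 1 - i)) = 2 * t (n - 1) + (\<Sum>k = 0..<n - 2. t (k + 1) * t (n - k - 2))"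
proof -
  obtain N where N: "n = N + 2" using n by (metis add.commute le_Suc_ex)
  have "(\<Sum>i = 0..n - 1. t i * t (n - 1 - i)) = (\<Sum>i = 0..Suc N. t i * t (Suc N - i))"
    using N by simp
  also have "\<dots> = t 0 * t (Suc N) + (\<Sum>i = 0..N. t (Suc i) * t (Suc N - Suc i))"
    by (simp only: sum.atLeast0_atMost_Suc_shift comp_def diff_zero)
  also have "(\<Sum>i = 0..N. t (Suc i) * t (Suc N - Suc i)) = (\<Sum>i = 0..<Suc N. t (Suc i) * t (Suc N - Suc i))"
    by (simp add: atLeastLessThanSuc_atLeastAtMost)
  also have "\<dots> = (\<Sum>i = 0..<N. t (Suc i) * t (Suc N - Suc i)) + t (Suc N) * t 0"
    by simp
  also have "(\<Sum>i = 0..<N. t (Suc i) * t (Suc N - Suc i)) = (\<Sum>k = 0..<n - 2. t (k + 1) * t (n - k - 2))"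
    using N by (intro sum.cong) auto
  finally have "(\<Sum>i = 0..n - 1. t i * t (n - 1 - i)) = t 0 * t (Suc N) + ((\<Sum>k = 0..<n - 2. t (k + 1) * t (n - k - 2)) + t (Suc N) * t 0)" .
  moreover have "n - 1 = Suc N" using N by simp
  ultimately show ?thesis unfolding t0 by (simp only: mult_1_left mult_1_right aux2)
qed

theorem mainTheorem4:
  fixes a b m :: "'a::field" and s :: "nat \<Rightarrow> 'a"
  assumes s0: "s 0 = 1"
    and s1: "s 1 = a - b + m"
    and srec: "\<And>n. n \<ge> 2 \<Longrightarrow>
      s n = (2 * m - b) * s (n - 1) + m * (\<Sum>k = 0..<n - 2. s (k + 1) * s (n - k - 2))"
  shows "riordan_act ((1 + fps_const a * fps_X) / (1 + fps_const b * fps_X))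
           (fps_const m * fps_X * (1 + fps_const a * fps_X) / (1 + fps_const b * fps_X)^2)
           catalan_fps
         = Abs_fps s"
proof -
  define u :: "'a fps" where "u = 1 + fps_const b * fps_X"
  define v :: "'a fps" where "v = 1 + fps_const a * fps_X"
  define ui where "ui = inverse u"
  define f where "f = fps_const m * fps_X * v / u^2"
  define D where "D = catalan_fps oo f"
  define F where "F = v / u * D"
  have u0: "u $ 0 = 1" by (simp add: u_def)
  have uui: "u * ui = 1" unfolding ui_def by (rule inverse_mult_eq_1') (simp add: u0)
  have g_eq: "v / u = v * ui" unfolding ui_def by (rule fps_divide_unit) (simp add: u0)
  have "(u^2) $ 0 = 1" by (simp add: power2_eq_square u0)
  then have f_eq: "f = fps_const m * fps_X * v * ui^2"
    unfolding f_def ui_def by (simp add: fps_divide_unit power2_eq_square fps_inverse_mult)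
  have f0: "f $ 0 = 0" unfolding f_eq by simp
  have D_eq: "D = 1 + f * D^2"
  proof -
    have "D = (1 + fps_X * catalan_fps^2) oo f" unfolding D_def by (subst catalan_fps_eq) (rule refl)
    also have "\<dots> = 1 + f * D^2"
      unfolding fps_compose_add_distrib fps_compose_mult_distrib[OF f0] fps_compose_power[OF f0, symmetric]
      using f0 by (simp add: D_def)
    finally show ?thesis .
  qed
  have key: "u * F = v + fps_const m * fps_X * F^2"
  proof -
    have "u * F = (u * ui) * v * D" unfolding F_def g_eq by (simp add: algebra_simps)
    also have "\<dots> = v * D" using uui by simp
    also have "\<dots> = v + v * (f * D^2)" by (subst D_eq) (simp add: algebra_simps)
    also have "v * (f * D^2) = fps_const m * fps_X * F^2"
      unfolding f_eq F_def g_eq by (simp add: algebra_simps power2_eq_square)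
    finally show ?thesis .
  qed
  have F0: "F $ 0 = 1"
    unfolding F_def g_eq D_def ui_def by (simp add: u0 v_def catalan_fps_def catalan_def)
  have coef: "F $ n + b * F $ (n - 1) = (if n = 1 then a else 0) + m * (F^2) $ (n - 1)" if n1: "n \<ge> 1" for n
  proof -
    have "(u * F) $ n = F $ n + b * F $ (n - 1)"
    proof -
      have "u * F = F + fps_const b * (fps_X * F)" unfolding u_def by (simp add: algebra_simps)
      then show ?thesis using n1 by simp
    qed
    moreover have "(v + fps_const m * fps_X * F^2) $ n = (if n = 1 then a else 0) + m * (F^2) $ (n - 1)"
    proof -
      have e: "v + fps_const m * fps_X * F^2 = 1 + fps_const a * fps_X + fps_const m * (fps_X * F^2)"
        unfolding v_def by (simp add: algebra_simps)
      show ?thesis unfolding e using n1 by (simp add: fps_X_nth del: fps_mult_left_const_nth) (simp add: fps_X_nth)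
    qed
    ultimately show ?thesis using key by simp
  qed
  have "F $ n = s n" for n
  proof (induction n rule: less_induct)
    case (less n)
    consider "n = 0" | "n = 1" | "n \<ge> 2" by linarith
    then show ?case
    proof cases
      case 1 then show ?thesis using F0 s0 by simp
    next
      case 2
      have "F $ 1 + b * F $ 0 = a + m * (F^2) $ 0" using coef[of 1] by simp
      then have "F $ 1 = a - b + m" using F0 by (simp add: power2_eq_square algebra_simps)
      then show ?thesis using 2 s1 by simp
    next
      case 3
      have sq: "(F^2) $ (n - 1) = (\<Sum>i = 0..n - 1. F $ i * F $ (n - 1 - i))"
        by (simp add: power2_eq_square fps_mult_nth)
      have "F $ n = - b * F $ (n - 1) + m * (F^2) $ (n - 1)"
        using coef[of n] 3 by (simp add: algebra_simps)
      also have "\<dots> = (2 * m - b) * F $ (n - 1) + m * (\<Sum>k = 0..<n - 2. F $ (k + 1) * F $ (n - k - 2))"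
        unfolding sq split_conv[where t = "\<lambda>i. F $ i", OF F0 3] by (simp add: algebra_simps)
      also have "\<dots> = (2 * m - b) * s (n - 1) + m * (\<Sum>k = 0..<n - 2. s (k + 1) * s (n - k - 2))"
        using 3 by (intro arg_cong2[where f = "(+)"] arg_cong2[where f = "(*)"] refl sum.cong)
           (auto simp: less)
      also have "\<dots> = s n" using srec[OF 3] by simp
      finally show ?thesis .
    qed
  qed
  then have "F = Abs_fps s" by (intro fps_ext) simp
  then show ?thesis unfolding riordan_act_def F_def D_def f_def u_def v_def .
qed

end
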